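(* Let $\lambda\in(0,1)$. A nonconstant meromorphic solution $\partial$ of the differential equation $9\,\partial^2(\partial')^2=2(1-\partial^2)(4\partial^3-3\partial+1-2\lambda^2)$ can have no zeros.
   Context: Here $\partial$ denotes an unknown meromorphic function of a complex variable (on a connected open subset of $\mathbb{C}$), not an operator; $\partial'$ is its derivative. *)

theory Defs
  imports "HOL-Complex_Analysis.Complex_Analysis"
begin

end

theory Submission
  imports Defs
begin

lemma cont_eq_at:
  fixes h1 h2 :: "complex \<Rightarrow> complex"
  assumes "isCont h1 z" "isCont h2 z" "eventually (\<lambda>w. h1 w = h2 w) (at z)"
  shows "h1 z = h2 z"
proof -
  have "(h1 \<longlongrightarrow> h1 z) (at z)" using assms(1) isContD by blast
  moreover have "(h1 \<longlongrightarrow> h2 z) (at z)"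
    using assms(2) isContD Lim_transform_eventually[of "\<lambda>w. h2 w = h1 w"] assms(3)
    by (metis (mono_tags, lifting) eventually_mono tendsto_cong)
  ultimately show ?thesis using tendsto_unique by (metis at_neq_bot)
qed

theorem theorem7:
  fixes f :: "complex \<Rightarrow> complex" and U :: "complex set" and l :: real
  assumes "0 < l" and "l < 1"
    and "open U" and "connected U"
    and "f meromorphic_on U"
    and nonconst: "\<not> (\<exists>c. \<forall>z\<in>U. f analytic_on {z} \<longrightarrow> f z = c)"
    and ode: "\<forall>z\<in>U. f analytic_on {z} \<longrightarrow>
      9 * (f z)\<^sup>2 * (deriv f z)\<^sup>2
        = 2 * (1 - (f z)\<^sup>2) * (4 * (f z)^3 - 3 * f z + 1 - 2 * (complex_of_real l)\<^sup>2)"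
  shows "\<forall>z\<in>U. \<not> (f \<longlongrightarrow> 0) (at z)"
proof (intro ballI notI)
  fix z0 assume z0: "z0 \<in> U" and lim: "(f \<longlongrightarrow> 0) (at z0)"
  define c where "c = 1 - 2 * (complex_of_real l)\<^sup>2"
  have an_cs: "eventually (\<lambda>z. f analytic_on {z}) (cosparse U)"
    using meromorphic_on_imp_analytic_cosparse[OF assms(5)] .
  have inU: "eventually (\<lambda>z. z \<in> U) (at z0)"
    using assms(3) z0 by (intro eventually_at_in_open') auto
  consider "eventually (\<lambda>z. f z = 0) (cosparse U)" | "eventually (\<lambda>z. f z \<noteq> 0) (cosparse U)"
    using meromorphic_imp_constant_or_avoid[OF assms(5,3,4)] by blast
  then show False
  proof cases
    case 1
    have "\<forall>z\<in>U. f analytic_on {z} \<longrightarrow> f z = 0"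
    proof (intro ballI impI)
      fix z assume z: "z \<in> U" "f analytic_on {z}"
      have ev: "eventually (\<lambda>w. f w = 0) (at z)"
        using 1 z(1) assms(3) eventually_cosparse_open_eq by blast
      have "isCont f z" using z(2) analytic_at_imp_isCont by blast
      moreover have "isCont (\<lambda>_. 0::complex) z" by simp
      ultimately show "f z = 0" using cont_eq_at[of z f "\<lambda>_. 0"] ev by simp
    qed
    with nonconst show False by blast
  next
    case 2
    have ev1: "eventually (\<lambda>z. f z \<noteq> 0) (at z0)"
      using 2 z0 assms(3) eventually_cosparse_open_eq by blast
    have ev2: "eventually (\<lambda>z. f analytic_on {z}) (at z0)"
      using an_cs z0 assms(3) eventually_cosparse_open_eq by blast
    define g where "g = remove_sings f"
    have iso: "isolated_singularity_at f z0"
      using assms(5) z0 meromorphic_on_isolated_singularity meromorphic_on_subset by (metis empty_subsetI insert_subset)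
    have ga: "g analytic_on {z0}"
      unfolding g_def using remove_sings_analytic_at[OF iso lim] .
    have g0: "g z0 = 0" unfolding g_def using lim by blast
    have gc: "isCont g z0" using ga analytic_at_imp_isCont by blast
    have dgc: "isCont (deriv g) z0"
      using ga analytic_deriv analytic_at_imp_isCont by blast
    have ev: "eventually (\<lambda>z. z \<in> U \<and> f analytic_on {z} \<and> f z \<noteq> 0 \<and> g z = f z \<and> deriv g z = deriv f z) (at z0)"
      using ev1 ev2 inU by eventually_elim (auto simp: g_def)
    have E1: "eventually (\<lambda>z. 9 * (g z)\<^sup>2 * (deriv g z)\<^sup>2
        = 2 * (1 - (g z)\<^sup>2) * (4 * (g z)^3 - 3 * g z + c)) (at z0)"
      using ev by eventually_elim (use ode in \<open>auto simp: c_def algebra_simps\<close>)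
    have "9 * (g z0)\<^sup>2 * (deriv g z0)\<^sup>2 = 2 * (1 - (g z0)\<^sup>2) * (4 * (g z0)^3 - 3 * g z0 + c)"
      by (rule cont_eq_at[OF _ _ E1]) (intro continuous_intros gc dgc)+
    hence c0: "c = 0" using g0 by simp
    have E2: "eventually (\<lambda>z. 9 * g z * (deriv g z)\<^sup>2
        = 2 * (1 - (g z)\<^sup>2) * (4 * (g z)^2 - 3)) (at z0)"
      using ev E1
    proof eventually_elim
      case (elim z)
      hence "g z * (9 * g z * (deriv g z)\<^sup>2) = g z * (2 * (1 - (g z)\<^sup>2) * (4 * (g z)^2 - 3))"
        using c0 by (simp add: power2_eq_square power3_eq_cube algebra_simps)
      thus ?case using elim by simp
    qed
    have "9 * g z0 * (deriv g z0)\<^sup>2 = 2 * (1 - (g z0)\<^sup>2) * (4 * (g z0)^2 - 3)"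
      by (rule cont_eq_at[OF _ _ E2]) (intro continuous_intros gc dgc)+
    thus False using g0 by simp
  qed
qed

end
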